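(* Let $V$ be a finite-dimensional vector space with a direct sum decomposition $V=V(1)\oplus\cdots\oplus V(l)$ and a flag of subspaces $V=\mathcal F^0V\supseteq\mathcal F^1V\supseteq\cdots\supseteq\mathcal F^mV=\{0\}$, $l,m\ge1$. Let $n=\dim V$ and for $1\le i\le n$ let $f(i)=\max\{k\ge0: i\le\dim\mathcal F^kV\}$. Then there exist bases $(x_i)_{1\le i\le n}$ and $(b_i)_{1\le i\le n}$ of $V$ and an upper triangular matrix $S=(s_{ij})\in k^{n\times n}$ with all diagonal entries $1$ such that: (1) for each $i$ there is $1\le g(i)\le l$ with $x_i\in V(g(i))$; (2) for each $0\le k\le m-1$, the vectors $b_i$ with $1\le i\le\dim\mathcal F^kV$ form a basis of $\mathcal F^kV$; (3) for all $1\le i\le n$, $b_i=x_i+\sum_{j>i}s_{ij}x_j=x_i+\sum_{j:\,f(j)<f(i),\,g(j)\ne g(i)}s_{ij}x_j$.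
   Context: $k$ denotes the ground field. *)

theory Defs
  imports Main "HOL.Vector_Spaces"
begin

definition indexed_basis ::
  "('k::field \<Rightarrow> 'v::ab_group_add \<Rightarrow> 'v) \<Rightarrow> (nat \<Rightarrow> 'v) \<Rightarrow> nat set \<Rightarrow> 'v set \<Rightarrow> bool" where
  "indexed_basis scale x I W \<longleftrightarrow>
     inj_on x I \<and> \<not> module.dependent scale (x ` I) \<and> module.span scale (x ` I) = W"

definition internal_direct_sum ::
  "('k::field \<Rightarrow> 'v::ab_group_add \<Rightarrow> 'v) \<Rightarrow> nat \<Rightarrow> (nat \<Rightarrow> 'v set) \<Rightarrow> bool" where
  "internal_direct_sum scale l Vs \<longleftrightarrow>
     (\<forall>i\<in>{1..l}. module.subspace scale (Vs i)) \<and>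
     (\<forall>v. \<exists>u. (\<forall>i\<in>{1..l}. u i \<in> Vs i) \<and> v = (\<Sum>i=1..l. u i)) \<and>
     (\<forall>u. (\<forall>i\<in>{1..l}. u i \<in> Vs i) \<and> (\<Sum>i=1..l. u i) = 0 \<longrightarrow> (\<forall>i\<in>{1..l}. u i = 0))"

definition is_flag ::
  "('k::field \<Rightarrow> 'v::ab_group_add \<Rightarrow> 'v) \<Rightarrow> nat \<Rightarrow> (nat \<Rightarrow> 'v set) \<Rightarrow> bool" where
  "is_flag scale m F \<longleftrightarrow>
     (\<forall>k\<le>m. module.subspace scale (F k)) \<and> F 0 = UNIV \<and> F m = {0} \<and>
     (\<forall>k<m. F (Suc k) \<subseteq> F k)"

definition flag_level ::
  "('k::field \<Rightarrow> 'v::ab_group_add \<Rightarrow> 'v) \<Rightarrow> nat \<Rightarrow> (nat \<Rightarrow> 'v set) \<Rightarrow> nat \<Rightarrow> nat" where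
  "flag_level scale m F i = Max {k. k \<le> m \<and> i \<le> vector_space.dim scale (F k)}"

end

theory Submission
  imports Defs
begin

context module begin

lemma indep_Un:
  assumes A: "independent A" and C: "independent C" and AC: "span A \<inter> span C \<subseteq> {0}"
  shows "independent (A \<union> C)"
  unfolding independent_explicit_module
proof (intro allI impI)
  fix t u v assume t: "finite t" "t \<subseteq> A \<union> C" and s: "(\<Sum>v\<in>t. u v *s v) = 0" and v: "v \<in> t"
  have split: "(\<Sum>v\<in>t. u v *s v) = (\<Sum>v\<in>t \<inter> A. u v *s v) + (\<Sum>v\<in>t - A. u v *s v)"
    using t(1) by (metis (no_types) sum.Int_Diff)
  define p where "p = (\<Sum>v\<in>t \<inter> A. u v *s v)"
  define q where "q = (\<Sum>v\<in>t - A. u v *s v)"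
  have pA: "p \<in> span A" unfolding p_def by (rule span_sum, rule span_scale, rule span_base) auto
  have qC: "q \<in> span C" unfolding q_def using t(2) by (intro span_sum span_scale span_base) auto
  have "p = - q" using s split p_def q_def by (simp add: eq_neg_iff_add_eq_0)
  then have "p \<in> span C" using qC span_neg by auto
  then have p0: "p = 0" using pA AC by auto
  then have q0: "q = 0" using \<open>p = - q\<close> by simp
  show "u v = 0"
  proof (cases "v \<in> A")
    case True
    show ?thesis using independentD[OF A, of "t \<inter> A" u v] p0 t(1) True v unfolding p_def by auto
  next
    case False
    show ?thesis using independentD[OF C, of "t - A" u v] q0 t False v unfolding q_def by auto
  qed
qed

lemma indep_Un_span_disj:
  assumes B: "independent (A \<union> C)" and disj: "A \<inter> C = {}"
  shows "span A \<inter> span C \<subseteq> {0}"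
proof
  fix v assume "v \<in> span A \<inter> span C"
  then have "v \<in> span A" "v \<in> span C" by auto
  obtain ta r where ta: "finite ta" "ta \<subseteq> A" "v = (\<Sum>a\<in>ta. r a *s a)"
    using \<open>v \<in> span A\<close> by (auto simp: span_explicit)
  obtain tc q where tc: "finite tc" "tc \<subseteq> C" "v = (\<Sum>a\<in>tc. q a *s a)"
    using \<open>v \<in> span C\<close> by (auto simp: span_explicit)
  define u where "u = (\<lambda>a. if a \<in> ta then r a else - q a)"
  have dj: "ta \<inter> tc = {}" using ta tc disj by auto
  have "(\<Sum>a\<in>ta \<union> tc. u a *s a) = (\<Sum>a\<in>ta. u a *s a) + (\<Sum>a\<in>tc. u a *s a)"
    using dj ta tc by (simp add: sum.union_disjoint)
  also have "(\<Sum>a\<in>ta. u a *s a) = v" using ta by (simp add: u_def)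
  also have "(\<Sum>a\<in>tc. u a *s a) = (\<Sum>a\<in>tc. - (q a *s a))"
    using dj by (intro sum.cong) (auto simp: u_def scale_minus_left)
  also have "\<dots> = - v" using tc by (simp add: sum_negf)
  finally have z: "(\<Sum>a\<in>ta \<union> tc. u a *s a) = 0" by simp
  have "\<forall>a\<in>ta. r a = 0"
  proof
    fix a assume a: "a \<in> ta"
    have "u a = 0" using independentD[OF B, of "ta \<union> tc" u a] z ta tc a by auto
    then show "r a = 0" using a by (simp add: u_def)
  qed
  then show "v \<in> {0}" using ta by simp
qed

end

lemma fl_props:
  fixes d :: "nat \<Rightarrow> nat"
  assumes anti: "\<And>a b. a \<le> b \<Longrightarrow> b \<le> m \<Longrightarrow> d b \<le> d a"
    and i: "i \<le> d 0"
  shows "Max {k. k \<le> m \<and> i \<le> d k} \<le> m"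
    and "\<And>k. k \<le> m \<Longrightarrow> (k \<le> Max {k. k \<le> m \<and> i \<le> d k} \<longleftrightarrow> i \<le> d k)"
proof -
  let ?S = "{k. k \<le> m \<and> i \<le> d k}"
  have fin: "finite ?S" by (rule finite_subset[of _ "{..m}"]) auto
  have ne: "0 \<in> ?S" using i by auto
  have mx: "Max ?S \<in> ?S" using fin ne Max_in by blast
  then show "Max ?S \<le> m" by auto
  fix k assume k: "k \<le> m"
  show "k \<le> Max ?S \<longleftrightarrow> i \<le> d k"
  proof
    assume "k \<le> Max ?S"
    then have "d (Max ?S) \<le> d k" using anti mx by auto
    then show "i \<le> d k" using mx by auto
  next
    assume "i \<le> d k"
    then show "k \<le> Max ?S" using fin k by (intro Max_ge) auto
  qed
qed

context finite_dimensional_vector_space begin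

definition INV :: "(nat \<Rightarrow> 'b set) \<Rightarrow> nat \<Rightarrow> (nat \<Rightarrow> 'b set) \<Rightarrow> nat \<Rightarrow> nat \<Rightarrow> (nat\<Rightarrow>'b) \<Rightarrow> (nat\<Rightarrow>'b) \<Rightarrow> (nat\<Rightarrow>nat) \<Rightarrow> bool" where
 "INV Vs l F m k x b g \<longleftrightarrow>
   (\<forall>j\<in>{dim (F k)<..dim UNIV}. 1 \<le> g j \<and> g j \<le> l \<and> x j \<in> Vs (g j)) \<and>
   inj_on x {dim (F k)<..dim UNIV} \<and> independent (x ` {dim (F k)<..dim UNIV}) \<and>
   (\<forall>v\<in>F k. v \<in> span (x ` {dim (F k)<..dim UNIV}) \<longrightarrow> v = 0) \<and>
   (\<forall>v. \<exists>a\<in>F k. \<exists>w\<in>span (x ` {dim (F k)<..dim UNIV}). v = a + w) \<and>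
   (\<forall>j\<in>{dim (F k)<..dim UNIV}. b j \<in> F (flag_level scale m F j) \<and>
       b j - x j \<in> span (x ` {j'\<in>{dim (F (flag_level scale m F j))<..dim UNIV}. g j' \<noteq> g j}))"

lemma flag_basics:
  assumes flag: "is_flag scale m F"
  shows "\<And>k. k \<le> m \<Longrightarrow> subspace (F k)"
    and "\<And>a c. a \<le> c \<Longrightarrow> c \<le> m \<Longrightarrow> F c \<subseteq> F a"
    and "\<And>a c. a \<le> c \<Longrightarrow> c \<le> m \<Longrightarrow> dim (F c) \<le> dim (F a)"
    and "dim (F 0) = dim (UNIV::'b set)"
    and "dim (F m) = 0"
    and "\<And>i k. i \<le> dim (UNIV::'b set) \<Longrightarrow> k \<le> m \<Longrightarrow> (k \<le> flag_level scale m F i \<longleftrightarrow> i \<le> dim (F k))"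
    and "\<And>i. i \<le> dim (UNIV::'b set) \<Longrightarrow> flag_level scale m F i \<le> m"
proof -
  show sub: "\<And>k. k \<le> m \<Longrightarrow> subspace (F k)" using flag by (auto simp: is_flag_def)
  have chain: "\<And>k. k < m \<Longrightarrow> F (Suc k) \<subseteq> F k" using flag by (auto simp: is_flag_def)
  show Fa: "\<And>a c. a \<le> c \<Longrightarrow> c \<le> m \<Longrightarrow> F c \<subseteq> F a"
  proof -
    fix a c show "a \<le> c \<Longrightarrow> c \<le> m \<Longrightarrow> F c \<subseteq> F a"
    proof (induction c)
      case 0 then show ?case by auto
    next
      case (Suc c)
      show ?case
      proof (cases "a = Suc c")
        case False
        then have "a \<le> c" using Suc by auto
        then show ?thesis using Suc chain[of c] by auto
      qed auto
    qed
  qed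
  show da: "\<And>a c. a \<le> c \<Longrightarrow> c \<le> m \<Longrightarrow> dim (F c) \<le> dim (F a)"
    using Fa dim_subset by blast
  show d0: "dim (F 0) = dim (UNIV::'b set)" using flag by (simp add: is_flag_def)
  show "dim (F m) = 0" using flag by (simp add: is_flag_def)
  show "\<And>i k. i \<le> dim (UNIV::'b set) \<Longrightarrow> k \<le> m \<Longrightarrow> (k \<le> flag_level scale m F i \<longleftrightarrow> i \<le> dim (F k))"
    unfolding flag_level_def using fl_props(2)[of m "\<lambda>k. dim (F k)"] da d0 by auto
  show "\<And>i. i \<le> dim (UNIV::'b set) \<Longrightarrow> flag_level scale m F i \<le> m"
    unfolding flag_level_def using fl_props(1)[of m "\<lambda>k. dim (F k)"] da d0 by auto
qed

lemma INV_0: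
  assumes flag: "is_flag scale m F"
  shows "INV Vs l F m 0 x b g"
proof -
  have "F 0 = UNIV" using flag by (simp add: is_flag_def)
  then show ?thesis unfolding INV_def by (auto simp: span_zero independent_empty)
qed


lemma INV_step:
  assumes dsum: "internal_direct_sum scale l Vs" and flag: "is_flag scale m F"
    and km: "k < m" and I: "INV Vs l F m k x b g"
  shows "\<exists>x' b' g'. INV Vs l F m (Suc k) x' b' g'"
proof -
  define n where "n = dim (UNIV::'b set)"
  define d where "d = (\<lambda>k. dim (F k))"
  define f where "f = flag_level scale m F"
  define J where "J = {d k<..n}"
  define N where "N = {d (Suc k)<..d k}"
  define X where "X = x ` J"
  define W where "W = span X"
  note fb = flag_basics[OF flag]
  have subF: "\<And>k. k \<le> m \<Longrightarrow> subspace (F k)" by (rule fb(1))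
  have Fanti: "\<And>a c. a \<le> c \<Longrightarrow> c \<le> m \<Longrightarrow> F c \<subseteq> F a" by (rule fb(2))
  have danti: "\<And>a c. a \<le> c \<Longrightarrow> c \<le> m \<Longrightarrow> d c \<le> d a" unfolding d_def by (rule fb(3))
  have dle: "\<And>k. d k \<le> n" unfolding d_def n_def by (rule dim_subset) auto
  have fiff: "\<And>i k. i \<le> n \<Longrightarrow> k \<le> m \<Longrightarrow> (k \<le> f i \<longleftrightarrow> i \<le> d k)"
    unfolding f_def d_def n_def by (rule fb(6))
  have fm: "\<And>i. i \<le> n \<Longrightarrow> f i \<le> m" unfolding f_def n_def by (rule fb(7))
  have dSk: "d (Suc k) \<le> d k" using danti km by auto
  have I1: "\<forall>j\<in>J. 1 \<le> g j \<and> g j \<le> l \<and> x j \<in> Vs (g j)"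
   and I2a: "inj_on x J" and I2b: "independent X"
   and I3: "\<forall>v\<in>F k. v \<in> W \<longrightarrow> v = 0"
   and I4: "\<forall>v. \<exists>a\<in>F k. \<exists>w\<in>W. v = a + w"
   and I5: "\<forall>j\<in>J. b j \<in> F (f j) \<and> b j - x j \<in> span (x ` {j'\<in>{d (f j)<..n}. g j' \<noteq> g j})"
    using I unfolding INV_def J_def X_def W_def d_def n_def f_def by auto
  have finJ: "finite J" unfolding J_def by auto
  have cardX: "card X = n - d k" unfolding X_def using card_image[OF I2a] J_def by simp
  have finX: "finite X" unfolding X_def using finJ by auto
  have subV: "\<And>i. i \<in> {1..l} \<Longrightarrow> subspace (Vs i)" using dsum by (auto simp: internal_direct_sum_def)
  define H where "H = (\<Union>i\<in>{1..l}. Vs i)"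
  have spanH: "span H = UNIV"
  proof (rule set_eqI, rule iffI)
    fix v :: 'b
    obtain u where u: "\<forall>i\<in>{1..l}. u i \<in> Vs i" "v = (\<Sum>i=1..l. u i)"
      using dsum unfolding internal_direct_sum_def by blast
    show "v \<in> span H" unfolding u(2) H_def
      by (rule span_sum, rule span_base) (use u(1) in force)
  qed auto
  obtain BF where BF: "BF \<subseteq> F (Suc k)" "independent BF" "F (Suc k) \<subseteq> span BF" "card BF = d (Suc k)"
    unfolding d_def using basis_exists by blast
  have spanBF: "span BF = F (Suc k)" using span_subspace[OF BF(1) BF(3) subF] km by auto
  have FSk: "F (Suc k) \<subseteq> F k" using Fanti km by auto
  have XBF: "span BF \<inter> span X \<subseteq> {0}" using I3 spanBF FSk W_def by auto
  have indS0: "independent (BF \<union> X)" by (rule indep_Un[OF BF(2) I2b XBF])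
  have disjBFX: "BF \<inter> X = {}"
  proof -
    have "BF \<inter> X \<subseteq> {0}" using XBF span_base by blast
    moreover have "0 \<notin> X" using I2b dependent_zero by blast
    ultimately show ?thesis by blast
  qed
  have finBF: "finite BF" using BF(2) finiteI_independent by blast
  have cardS0: "card (BF \<union> X) = d (Suc k) + (n - d k)"
    using card_Un_disjoint[OF finBF finX disjBFX] BF(4) cardX by simp
  obtain B where B: "BF \<union> X \<subseteq> B" "B \<subseteq> (BF \<union> X) \<union> H" "independent B" "(BF \<union> X) \<union> H \<subseteq> span B"
    using maximal_independent_subset_extend[of "BF \<union> X" "(BF \<union> X) \<union> H"] indS0 by blast
  have spanB: "span B = UNIV"
  proof -
    have "span H \<subseteq> span B" using B(4) span_minimal[of H "span B"] by auto
    then show ?thesis using spanH by auto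
  qed
  have cardB: "card B = n" unfolding n_def using basis_card_eq_dim[of B UNIV] spanB B(3) by auto
  have finB: "finite B" using B(3) finiteI_independent by blast
  define Y0 where "Y0 = B - (BF \<union> X)"
  have Y0H: "Y0 \<subseteq> H" using B(2) Y0_def by auto
  have cardY0: "card Y0 = d k - d (Suc k)"
    unfolding Y0_def using card_Diff_subset[OF finite_subset[OF B(1) finB] B(1)] cardB cardS0 dSk dle[of k]
    by simp
  have BY: "B = (BF \<union> X) \<union> Y0" using B(1) Y0_def by auto
  have disj: "span (BF \<union> X) \<inter> span Y0 \<subseteq> {0}"
  proof (rule indep_Un_span_disj)
    show "independent ((BF \<union> X) \<union> Y0)" using B(3) BY by simp
    show "(BF \<union> X) \<inter> Y0 = {}" unfolding Y0_def by auto
  qed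
  have cardN: "card N = d k - d (Suc k)" unfolding N_def by simp
  have finY0: "finite Y0" using finB Y0_def by auto
  have finN: "finite N" unfolding N_def by simp
  obtain e where e: "bij_betw e N Y0"
    using finite_same_card_bij[OF finN finY0] cardN cardY0 by auto
  have choice: "\<forall>t\<in>N. \<exists>xn bn gn. 1 \<le> gn \<and> gn \<le> l \<and> xn \<in> Vs gn \<and> bn \<in> F k \<and>
      bn - xn \<in> span (x ` {j\<in>J. g j \<noteq> gn}) \<and> e t - xn \<in> W"
  proof
    fix t assume t: "t \<in> N"
    define y where "y = e t"
    have "y \<in> H" using bij_betw_apply[OF e t] Y0H y_def by blast
    then obtain gy where gy: "gy \<in> {1..l}" "y \<in> Vs gy" unfolding H_def by blast
    obtain a w where aw: "a \<in> F k" "w \<in> W" "y = a + w" using I4 by blast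
    obtain u where u: "w = (\<Sum>v\<in>X. u v *s v)" using aw(2) span_finite[OF finX] W_def by auto
    define c where "c = (\<lambda>j. u (x j))"
    have w: "w = (\<Sum>j\<in>J. c j *s x j)" unfolding u X_def c_def
      using sum.reindex[OF I2a, of "\<lambda>v. u v *s v"] by simp
    define s1 where "s1 = (\<Sum>j\<in>J \<inter> {j. g j = gy}. c j *s x j)"
    define s2 where "s2 = (\<Sum>j\<in>J - {j. g j = gy}. c j *s x j)"
    have ws: "w = s1 + s2" unfolding w s1_def s2_def using finJ by (metis sum.Int_Diff)
    show "\<exists>xn bn gn. 1 \<le> gn \<and> gn \<le> l \<and> xn \<in> Vs gn \<and> bn \<in> F k \<and>
      bn - xn \<in> span (x ` {j\<in>J. g j \<noteq> gn}) \<and> e t - xn \<in> W"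
    proof (intro exI conjI)
      show "1 \<le> gy" "gy \<le> l" using gy by auto
      have "s1 \<in> Vs gy" unfolding s1_def
        by (rule subspace_sum[OF subV[OF gy(1)]], rule subspace_scale[OF subV[OF gy(1)]]) (use I1 in auto)
      then show "y - s1 \<in> Vs gy" using subspace_diff[OF subV[OF gy(1)] gy(2)] by blast
      show "a \<in> F k" by (rule aw(1))
      have "a - (y - s1) = - s2" using aw(3) ws by (simp add: algebra_simps)
      moreover have "s2 \<in> span (x ` {j\<in>J. g j \<noteq> gy})" unfolding s2_def
        by (rule span_sum, rule span_scale, rule span_base) auto
      ultimately show "a - (y - s1) \<in> span (x ` {j\<in>J. g j \<noteq> gy})" using span_neg by metis
      have "s1 \<in> W" unfolding s1_def W_def X_def
        by (rule span_sum, rule span_scale, rule span_base) auto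
      then show "e t - (y - s1) \<in> W" using y_def by simp
    qed
  qed
  obtain XN where XN: "\<forall>t\<in>N. \<exists>bn gn. 1 \<le> gn \<and> gn \<le> l \<and> XN t \<in> Vs gn \<and> bn \<in> F k \<and>
      bn - XN t \<in> span (x ` {j\<in>J. g j \<noteq> gn}) \<and> e t - XN t \<in> W"
    using bchoice[OF choice] by blast
  obtain BN where BN: "\<forall>t\<in>N. \<exists>gn. 1 \<le> gn \<and> gn \<le> l \<and> XN t \<in> Vs gn \<and> BN t \<in> F k \<and>
      BN t - XN t \<in> span (x ` {j\<in>J. g j \<noteq> gn}) \<and> e t - XN t \<in> W"
    using bchoice[OF XN] by blast
  obtain GN where XBG: "\<forall>t\<in>N. 1 \<le> GN t \<and> GN t \<le> l \<and> XN t \<in> Vs (GN t) \<and> BN t \<in> F k \<and>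
      BN t - XN t \<in> span (x ` {j\<in>J. g j \<noteq> GN t}) \<and> e t - XN t \<in> W"
    using bchoice[OF BN] by blast
  define x' where "x' = (\<lambda>j. if j \<in> J then x j else XN j)"
  define b' where "b' = (\<lambda>j. if j \<in> J then b j else BN j)"
  define g' where "g' = (\<lambda>j. if j \<in> J then g j else GN j)"
  have JN: "{d (Suc k)<..n} = J \<union> N" unfolding J_def N_def using dSk dle[of k] by auto
  have JNd: "J \<inter> N = {}" unfolding J_def N_def by auto
  have x'img: "x' ` (J \<union> N) = X \<union> XN ` N" unfolding x'_def X_def using JNd by (auto simp: image_def)
  have XW: "\<And>t. t \<in> N \<Longrightarrow> e t - XN t \<in> span X" using XBG W_def by blast
  have eY: "\<And>t. t \<in> N \<Longrightarrow> e t \<in> Y0" by (rule bij_betw_apply[OF e])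
  have Ye: "\<And>v. v \<in> Y0 \<Longrightarrow> \<exists>t\<in>N. v = e t" using bij_betw_imp_surj_on[OF e] by blast
  have sp1: "X \<union> XN ` N \<subseteq> span (X \<union> Y0)"
  proof
    fix v assume v: "v \<in> X \<union> XN ` N"
    show "v \<in> span (X \<union> Y0)"
    proof (cases "v \<in> X")
      case True then show ?thesis by (intro span_base) blast
    next
      case False
      then obtain t where t: "t \<in> N" "v = XN t" using v by blast
      have 1: "e t \<in> span (X \<union> Y0)" by (intro span_base) (use eY[OF t(1)] in blast)
      have 2: "e t - XN t \<in> span (X \<union> Y0)" using XW[OF t(1)] span_mono[of X "X \<union> Y0"] by blast
      have "e t - (e t - XN t) \<in> span (X \<union> Y0)" using span_diff[OF 1 2] .
      then show ?thesis using t(2) by simp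
    qed
  qed
  have sp2: "X \<union> Y0 \<subseteq> span (X \<union> XN ` N)"
  proof
    fix v assume v: "v \<in> X \<union> Y0"
    show "v \<in> span (X \<union> XN ` N)"
    proof (cases "v \<in> X")
      case True then show ?thesis by (intro span_base) blast
    next
      case False
      then obtain t where t: "t \<in> N" "v = e t" using v Ye by blast
      have 1: "XN t \<in> span (X \<union> XN ` N)" by (intro span_base) (use t(1) in blast)
      have 2: "e t - XN t \<in> span (X \<union> XN ` N)" using XW[OF t(1)] span_mono[of X "X \<union> XN ` N"] by blast
      have "(e t - XN t) + XN t \<in> span (X \<union> XN ` N)" using span_add[OF 2 1] .
      then show ?thesis using t(2) by simp
    qed
  qed
  have sp: "span (X \<union> XN ` N) = span (X \<union> Y0)" unfolding span_eq using sp1 sp2 by (rule conjI)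
  have indXY: "independent (X \<union> Y0)" by (rule independent_mono[OF B(3)]) (use B(1) in \<open>unfold Y0_def, blast\<close>)
  have cardXY: "card (X \<union> Y0) = n - d (Suc k)"
  proof -
    have "X \<inter> Y0 = {}" using Y0_def by auto
    then have "card (X \<union> Y0) = card X + card Y0" using finX finY0 card_Un_disjoint by blast
    then show ?thesis using cardX cardY0 dSk dle[of k] by simp
  qed
  have dimX': "dim (x' ` (J \<union> N)) = n - d (Suc k)"
  proof -
    have "dim (x' ` (J \<union> N)) = dim (span (x' ` (J \<union> N)))" by (simp only: dim_span)
    also have "\<dots> = dim (span (X \<union> Y0))" using x'img sp by simp
    also have "\<dots> = card (X \<union> Y0)" by (rule dim_span_eq_card_independent[OF indXY])
    finally show ?thesis using cardXY by simp
  qed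
  have cardJN: "card (J \<union> N) = n - d (Suc k)" unfolding JN[symmetric] by simp
  have finJN: "finite (J \<union> N)" unfolding JN[symmetric] by simp
  have indX': "independent (x' ` (J \<union> N))"
  proof (rule card_le_dim_spanning[OF subset_refl span_superset finite_imageI[OF finJN]])
    have "card (x' ` (J \<union> N)) \<le> card (J \<union> N)" by (rule card_image_le[OF finJN])
    then show "card (x' ` (J \<union> N)) \<le> dim (x' ` (J \<union> N))" using dimX' cardJN by simp
  qed
  have injX': "inj_on x' (J \<union> N)"
  proof (rule eq_card_imp_inj_on[OF finJN])
    have "card (x' ` (J \<union> N)) = n - d (Suc k)" using dim_eq_card_independent[OF indX'] dimX' by simp
    then show "card (x' ` (J \<union> N)) = card (J \<union> N)" using cardJN by simp
  qed
  have spanX': "span (x' ` (J \<union> N)) = span (X \<union> Y0)" using x'img sp by simp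
  show ?thesis
  proof -
    have G1: "\<forall>j\<in>J \<union> N. 1 \<le> g' j \<and> g' j \<le> l \<and> x' j \<in> Vs (g' j)"
      using I1 XBG JNd unfolding x'_def g'_def by auto
    have G3: "\<forall>v\<in>F (Suc k). v \<in> span (x' ` (J \<union> N)) \<longrightarrow> v = 0"
    proof (intro ballI impI)
      fix v assume v: "v \<in> F (Suc k)" "v \<in> span (x' ` (J \<union> N))"
      then obtain w y where wy: "v = w + y" "w \<in> span X" "y \<in> span Y0"
        using spanX' span_Un by auto
      have "v \<in> span (BF \<union> X)" using v(1) spanBF span_mono[of BF "BF \<union> X"] by auto
      moreover have "w \<in> span (BF \<union> X)" using wy(2) span_mono[of X "BF \<union> X"] by auto
      ultimately have "v - w \<in> span (BF \<union> X)" using span_diff by blast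
      then have "y = 0" using disj wy by (auto simp: algebra_simps)
      then have "v = w" using wy by simp
      then show "v = 0" using I3 v(1) FSk wy(2) W_def by auto
    qed
    have G4: "\<forall>v. \<exists>a\<in>F (Suc k). \<exists>w\<in>span (x' ` (J \<union> N)). v = a + w"
    proof
      fix v :: 'b
      have "v \<in> span ((BF \<union> X) \<union> Y0)" using spanB BY by simp
      then obtain s y where sy: "v = s + y" "s \<in> span (BF \<union> X)" "y \<in> span Y0" using span_Un by blast
      then obtain s1 s2 where s: "s = s1 + s2" "s1 \<in> span BF" "s2 \<in> span X" using span_Un by blast
      have "s2 + y \<in> span (X \<union> Y0)" using s(3) sy(3) span_Un by blast
      then show "\<exists>a\<in>F (Suc k). \<exists>w\<in>span (x' ` (J \<union> N)). v = a + w"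
        using spanX' s(2) spanBF sy(1) s(1) by (intro bexI[of _ s1] bexI[of _ "s2 + y"]) (auto simp: add.assoc)
    qed
    have G5: "\<forall>j\<in>J \<union> N. b' j \<in> F (f j) \<and> b' j - x' j \<in> span (x' ` {j'\<in>{d (f j)<..n}. g' j' \<noteq> g' j})"
    proof
      fix j assume j: "j \<in> J \<union> N"
      have jn: "j \<le> n" using j JN by auto
      show "b' j \<in> F (f j) \<and> b' j - x' j \<in> span (x' ` {j'\<in>{d (f j)<..n}. g' j' \<noteq> g' j})"
      proof (cases "j \<in> J")
        case True
        have "\<not> k \<le> f j" using fiff[OF jn] km True J_def by auto
        then have "d k \<le> d (f j)" using danti km by auto
        then have sub: "{d (f j)<..n} \<subseteq> J" unfolding J_def by auto
        have "x' ` {j'\<in>{d (f j)<..n}. g' j' \<noteq> g' j} = x ` {j'\<in>{d (f j)<..n}. g j' \<noteq> g j}"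
          using sub True unfolding x'_def g'_def by (auto simp: image_def) 
        then show ?thesis using I5 True unfolding b'_def x'_def by auto
      next
        case False
        then have jN: "j \<in> N" using j by auto
        have "k \<le> f j" using fiff[OF jn] km jN N_def by auto
        moreover have "\<not> Suc k \<le> f j" using fiff[OF jn] km jN N_def by auto
        ultimately have fj: "f j = k" by auto
        have "x' ` {j'\<in>{d (f j)<..n}. g' j' \<noteq> g' j} = x ` {j'\<in>J. g j' \<noteq> GN j}"
          using False fj unfolding x'_def g'_def J_def by (auto simp: image_def) 
        then show ?thesis using XBG jN False fj unfolding b'_def x'_def by auto
      qed
    qed
    have "INV Vs l F m (Suc k) x' b' g'"
      unfolding INV_def using G1 injX' indX' G3 G4 G5 JN
      unfolding d_def n_def f_def by simp
    then show ?thesis by blast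
  qed
qed


lemma INV_exists:
  assumes dsum: "internal_direct_sum scale l Vs" and flag: "is_flag scale m F"
  shows "k \<le> m \<Longrightarrow> \<exists>x b g. INV Vs l F m k x b g"
proof (induction k)
  case 0 then show ?case using INV_0[OF flag] by blast
next
  case (Suc k)
  then obtain x b g where "INV Vs l F m k x b g" by auto
  then show ?case using INV_step[OF dsum flag, of k] Suc.prems by auto
qed

lemma main_fd:
  assumes dsum: "internal_direct_sum scale l Vs" and flag: "is_flag scale m F"
  shows "\<exists>(x :: nat \<Rightarrow> 'b) (b :: nat \<Rightarrow> 'b) (S :: nat \<Rightarrow> nat \<Rightarrow> 'a) (g :: nat \<Rightarrow> nat).
    (let n = dim (UNIV :: 'b set); f = flag_level scale m F in
      indexed_basis scale x {1..n} UNIV \<and>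
      indexed_basis scale b {1..n} UNIV \<and>
      (\<forall>i\<in>{1..n}. \<forall>j\<in>{1..n}. j < i \<longrightarrow> S i j = 0) \<and>
      (\<forall>i\<in>{1..n}. S i i = 1) \<and>
      (\<forall>i\<in>{1..n}. 1 \<le> g i \<and> g i \<le> l \<and> x i \<in> Vs (g i)) \<and>
      (\<forall>k\<le>m - 1. indexed_basis scale b {1..dim (F k)} (F k)) \<and>
      (\<forall>i\<in>{1..n}.
         b i = x i + (\<Sum>j\<in>{i<..n}. scale (S i j) (x j)) \<and>
         b i = x i + (\<Sum>j\<in>{j\<in>{1..n}. f j < f i \<and> g j \<noteq> g i}. scale (S i j) (x j))))"
proof -
  define n where "n = dim (UNIV::'b set)"
  define d where "d = (\<lambda>k. dim (F k))"
  define f where "f = flag_level scale m F"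
  note fb = flag_basics[OF flag]
  have subF: "\<And>k. k \<le> m \<Longrightarrow> subspace (F k)" by (rule fb(1))
  have Fanti: "\<And>a c. a \<le> c \<Longrightarrow> c \<le> m \<Longrightarrow> F c \<subseteq> F a" by (rule fb(2))
  have dle: "\<And>k. d k \<le> n" unfolding d_def n_def by (rule dim_subset) auto
  have fiff: "\<And>i k. i \<le> n \<Longrightarrow> k \<le> m \<Longrightarrow> (k \<le> f i \<longleftrightarrow> i \<le> d k)"
    unfolding f_def d_def n_def by (rule fb(6))
  have fm: "\<And>i. i \<le> n \<Longrightarrow> f i \<le> m" unfolding f_def n_def by (rule fb(7))
  have dm: "d m = 0" unfolding d_def by (rule fb(5))
  have Fm: "F m = {0}" using flag by (simp add: is_flag_def)
  obtain x b g where I: "INV Vs l F m m x b g" using INV_exists[OF dsum flag, of m] by auto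
  have JJ: "{dim (F m)<..dim (UNIV::'b set)} = {1..dim (UNIV::'b set)}" unfolding fb(5) by auto
  have I1: "\<forall>j\<in>{1..n}. 1 \<le> g j \<and> g j \<le> l \<and> x j \<in> Vs (g j)"
   and I2a: "inj_on x {1..n}" and I2b: "independent (x ` {1..n})"
   and I4: "\<forall>v. \<exists>a\<in>F m. \<exists>w\<in>span (x ` {1..n}). v = a + w"
   and I5: "\<forall>j\<in>{1..n}. b j \<in> F (f j) \<and> b j - x j \<in> span (x ` {j'\<in>{d (f j)<..n}. g j' \<noteq> g j})"
    using I unfolding INV_def JJ d_def n_def f_def by auto
  have spanx: "span (x ` {1..n}) = UNIV" using I4 Fm by auto
  define Ji where "Ji = (\<lambda>i. {j\<in>{d (f i)<..n}. g j \<noteq> g i})"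
  have iJ: "\<And>i. i \<in> {1..n} \<Longrightarrow> i \<le> d (f i)"
  proof -
    fix i assume i: "i \<in> {1..n}"
    then have "i \<le> n" by simp
    then show "i \<le> d (f i)" using fiff[of i "f i"] fm[of i] by simp
  qed
  have Jisub: "\<And>i. i \<in> {1..n} \<Longrightarrow> Ji i \<subseteq> {i<..n}"
  proof -
    fix i assume i: "i \<in> {1..n}"
    show "Ji i \<subseteq> {i<..n}" unfolding Ji_def using iJ[OF i] by auto
  qed
  have Jisub1: "\<And>i. Ji i \<subseteq> {1..n}" unfolding Ji_def by auto
  have coef: "\<forall>i\<in>{1..n}. \<exists>c. b i - x i = (\<Sum>j\<in>Ji i. c j *s x j)"
  proof
    fix i assume i: "i \<in> {1..n}"
    have fin: "finite (Ji i)" unfolding Ji_def by auto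
    have inj: "inj_on x (Ji i)" using inj_on_subset[OF I2a Jisub1] .
    have "b i - x i \<in> span (x ` Ji i)" unfolding Ji_def using bspec[OF I5 i] by (rule conjunct2)
    then obtain u where u: "b i - x i = (\<Sum>v\<in>x ` Ji i. u v *s v)" using span_finite[OF finite_imageI[OF fin]] by auto
    show "\<exists>c. b i - x i = (\<Sum>j\<in>Ji i. c j *s x j)"
      using u sum.reindex[OF inj, of "\<lambda>v. u v *s v"] by (intro exI[of _ "\<lambda>j. u (x j)"]) simp
  qed
  obtain C where C: "\<forall>i\<in>{1..n}. b i - x i = (\<Sum>j\<in>Ji i. C i j *s x j)"
    using bchoice[OF coef] by blast
  define S where "S = (\<lambda>i j. if j = i then 1 else if j \<in> Ji i then C i j else 0)"
  have eq2: "\<forall>i\<in>{1..n}. b i = x i + (\<Sum>j\<in>Ji i. S i j *s x j)"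
  proof
    fix i assume i: "i \<in> {1..n}"
    have "(\<Sum>j\<in>Ji i. S i j *s x j) = (\<Sum>j\<in>Ji i. C i j *s x j)"
      using Jisub[OF i] by (intro sum.cong) (auto simp: S_def)
    moreover have "b i - x i = (\<Sum>j\<in>Ji i. C i j *s x j)" using bspec[OF C i] .
    ultimately show "b i = x i + (\<Sum>j\<in>Ji i. S i j *s x j)" by (simp add: diff_eq_eq add.commute)
  qed
  have eq1: "\<forall>i\<in>{1..n}. (\<Sum>j\<in>{i<..n}. S i j *s x j) = (\<Sum>j\<in>Ji i. S i j *s x j)"
  proof
    fix i assume i: "i \<in> {1..n}"
    show "(\<Sum>j\<in>{i<..n}. S i j *s x j) = (\<Sum>j\<in>Ji i. S i j *s x j)"
      by (rule sum.mono_neutral_right) (use Jisub[OF i] in \<open>auto simp: S_def\<close>)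
  qed
  have seteq: "\<forall>i\<in>{1..n}. {j\<in>{1..n}. f j < f i \<and> g j \<noteq> g i} = Ji i"
  proof
    fix i assume i: "i \<in> {1..n}"
    have "\<And>j. j \<in> {1..n} \<Longrightarrow> (f j < f i \<longleftrightarrow> d (f i) < j)"
    proof -
      fix j assume j: "j \<in> {1..n}"
      have "f i \<le> f j \<longleftrightarrow> j \<le> d (f i)" using fiff[of j "f i"] fm[of i] i j by auto
      then show "f j < f i \<longleftrightarrow> d (f i) < j" by auto
    qed
    then show "{j\<in>{1..n}. f j < f i \<and> g j \<noteq> g i} = Ji i" unfolding Ji_def by auto
  qed
  have xb: "\<And>i. i \<in> {1..n} \<Longrightarrow> x i \<in> span (b ` {1..n})"
  proof -
    fix i show "i \<in> {1..n} \<Longrightarrow> x i \<in> span (b ` {1..n})"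
    proof (induction "n - i" arbitrary: i rule: less_induct)
      case less
      have "x i = b i - (\<Sum>j\<in>{i<..n}. S i j *s x j)"
        using bspec[OF eq2 less.prems] bspec[OF eq1 less.prems] by simp
      moreover have "b i \<in> span (b ` {1..n})" using less.prems by (intro span_base) auto
      moreover have "(\<Sum>j\<in>{i<..n}. S i j *s x j) \<in> span (b ` {1..n})"
      proof (rule span_sum, rule span_scale)
        fix j assume j: "j \<in> {i<..n}"
        then show "x j \<in> span (b ` {1..n})" using less.prems by (intro less.hyps) auto
      qed
      ultimately show ?case using span_diff by metis
    qed
  qed
  have spanb: "span (b ` {1..n}) = UNIV"
  proof -
    have "span (x ` {1..n}) \<subseteq> span (b ` {1..n})"
      by (rule span_minimal) (use xb in auto)
    then show ?thesis using spanx by auto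
  qed
  have finb: "finite (b ` {1..n})" by simp
  have cbl: "card (b ` {1..n}) \<le> n" using card_image_le[of "{1..n}" b] by simp
  have indb: "independent (b ` {1..n})"
    by (rule card_le_dim_spanning[of _ UNIV]) (use spanb cbl n_def in auto)
  have cbg: "n \<le> card (b ` {1..n})" using dim_le_card[of UNIV "b ` {1..n}"] spanb n_def by simp
  have injb: "inj_on b {1..n}" using eq_card_imp_inj_on[of "{1..n}" b] cbl cbg by simp
  have flagb: "\<forall>k\<le>m - 1. indexed_basis scale b {1..d k} (F k)"
  proof (intro allI impI)
    fix k assume k: "k \<le> m - 1"
    then have km: "k \<le> m" by simp
    have sub: "{1..d k} \<subseteq> {1..n}" using dle[of k] by auto
    have inj: "inj_on b {1..d k}" using inj_on_subset[OF injb sub] .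
    have ind: "independent (b ` {1..d k})" by (rule independent_mono[OF indb]) (use sub in blast)
    have inF: "b ` {1..d k} \<subseteq> F k"
    proof
      fix v assume "v \<in> b ` {1..d k}"
      then obtain i where i: "i \<in> {1..d k}" "v = b i" by auto
      have in1: "i \<in> {1..n}" using i sub by auto
      have iln: "i \<le> n" using in1 by simp
      have "k \<le> f i" using fiff[OF iln km] i by simp
      then have "F (f i) \<subseteq> F k" using Fanti[of k "f i"] fm[OF iln] by simp
      moreover have "b i \<in> F (f i)" using bspec[OF I5 in1] by (rule conjunct1)
      ultimately show "v \<in> F k" using i(2) by blast
    qed
    have "span (b ` {1..d k}) \<subseteq> F k" using span_minimal[OF inF subF[OF km]] .
    moreover have "F k \<subseteq> span (b ` {1..d k})"
    proof (rule card_ge_dim_independent[OF inF ind])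
      have "card (b ` {1..d k}) = d k" using card_image[OF inj] by simp
      then show "dim (F k) \<le> card (b ` {1..d k})" unfolding d_def by simp
    qed
    ultimately show "indexed_basis scale b {1..d k} (F k)"
      unfolding indexed_basis_def using inj ind by auto
  qed
  show ?thesis
    unfolding Let_def n_def[symmetric] f_def[symmetric]
  proof (intro exI conjI)
    show "indexed_basis scale x {1..n} UNIV" unfolding indexed_basis_def using I2a I2b spanx by auto
    show "indexed_basis scale b {1..n} UNIV" unfolding indexed_basis_def using injb indb spanb by auto
    show "\<forall>i\<in>{1..n}. \<forall>j\<in>{1..n}. j < i \<longrightarrow> S i j = 0"
    proof (intro ballI impI)
      fix i j assume i: "i \<in> {1..n}" and j: "j \<in> {1..n}" and ji: "j < i"
      have "j \<notin> Ji i" using Jisub[OF i] ji by auto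
      then show "S i j = 0" using ji unfolding S_def by simp
    qed
    show "\<forall>i\<in>{1..n}. S i i = 1" by (simp add: S_def)
    show "\<forall>i\<in>{1..n}. 1 \<le> g i \<and> g i \<le> l \<and> x i \<in> Vs (g i)" by (rule I1)
    show "\<forall>k\<le>m - 1. indexed_basis scale b {1..dim (F k)} (F k)" using flagb unfolding d_def .
    show "\<forall>i\<in>{1..n}. b i = x i + (\<Sum>j\<in>{i<..n}. S i j *s x j) \<and>
         b i = x i + (\<Sum>j\<in>{j\<in>{1..n}. f j < f i \<and> g j \<noteq> g i}. S i j *s x j)"
    proof
      fix i assume i: "i \<in> {1..n}"
      have e1: "(\<Sum>j\<in>{i<..n}. S i j *s x j) = (\<Sum>j\<in>Ji i. S i j *s x j)" using bspec[OF eq1 i] .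
      have e2: "b i = x i + (\<Sum>j\<in>Ji i. S i j *s x j)" using bspec[OF eq2 i] .
      have e3: "{j\<in>{1..n}. f j < f i \<and> g j \<noteq> g i} = Ji i" using bspec[OF seteq i] .
      show "b i = x i + (\<Sum>j\<in>{i<..n}. S i j *s x j) \<and>
         b i = x i + (\<Sum>j\<in>{j\<in>{1..n}. f j < f i \<and> g j \<noteq> g i}. S i j *s x j)"
        unfolding e1 e3 by (intro conjI e2)
    qed
  qed
qed

end

theorem mainTheorem16:
  fixes scale :: "'k::field \<Rightarrow> 'v::ab_group_add \<Rightarrow> 'v"
    and l m :: nat
    and Vs F :: "nat \<Rightarrow> 'v set"
  assumes vs: "vector_space scale"
    and fin: "\<exists>B. finite B \<and> module.span scale B = UNIV"
    and dsum: "internal_direct_sum scale l Vs"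
    and flag: "is_flag scale m F"
    and l1: "l \<ge> 1" and m1: "m \<ge> 1"
  shows "\<exists>(x :: nat \<Rightarrow> 'v) (b :: nat \<Rightarrow> 'v) (S :: nat \<Rightarrow> nat \<Rightarrow> 'k) (g :: nat \<Rightarrow> nat).
    (let n = vector_space.dim scale (UNIV :: 'v set); f = flag_level scale m F in
      indexed_basis scale x {1..n} UNIV \<and>
      indexed_basis scale b {1..n} UNIV \<and>
      (\<forall>i\<in>{1..n}. \<forall>j\<in>{1..n}. j < i \<longrightarrow> S i j = 0) \<and>
      (\<forall>i\<in>{1..n}. S i i = 1) \<and>
      (\<forall>i\<in>{1..n}. 1 \<le> g i \<and> g i \<le> l \<and> x i \<in> Vs (g i)) \<and>
      (\<forall>k\<le>m - 1. indexed_basis scale b {1..vector_space.dim scale (F k)} (F k)) \<and>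
      (\<forall>i\<in>{1..n}.
         b i = x i + (\<Sum>j\<in>{i<..n}. scale (S i j) (x j)) \<and>
         b i = x i + (\<Sum>j\<in>{j\<in>{1..n}. f j < f i \<and> g j \<noteq> g i}. scale (S i j) (x j))))"
proof -
  interpret vector_space scale by (rule vs)
  obtain B0 where B0: "finite B0" "span B0 = UNIV" using fin by blast
  obtain Bs where Bs: "Bs \<subseteq> B0" "independent Bs" "B0 \<subseteq> span Bs"
    using maximal_independent_subset[of B0] by blast
  have "span B0 \<subseteq> span Bs" using span_minimal[OF Bs(3)] by simp
  then have spanBs: "span Bs = UNIV" using B0(2) by auto
  interpret fd: finite_dimensional_vector_space scale Bs
    by unfold_locales (use Bs B0 finite_subset spanBs in auto)
  show ?thesis by (rule fd.main_fd[OF dsum flag])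
qed

end
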